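(* For every $N$ there is $t>1$ with the following property. Let $\theta\in\Theta_N$ and consider the renormalization triangulation associated with any sector renormalization of $\mathbb{L}_\theta$. Then any two sectors (triangles) of this triangulation have comparable angles at $0$: the ratio of their angles lies in $[1/t,t]$.
   Context: For $\theta\in\mathbb{R}/\mathbb{Z}$ let $\mathbb{L}_\theta:\overline{\mathbb{D}}\to\overline{\mathbb{D}}$, $z\mapsto e^{2\pi i\theta}z$. $\Theta_N$ is the set of $\theta$ such that $\theta=[0;a_1,a_2,\dots]$ with all $|a_i|\le N$, or $\theta=1-[0;a_1,a_2,\dots]$ with all $|a_i|\le N$. A sector renormalization of $\mathbb{L}_\theta$ consists of a closed sector $\mathbb{X}=\mathbb{X}_-\cup\mathbb{X}_+\subset\overline{\mathbb{D}}$ with vertex $0$, split into two closed subsectors with common boundary ray through $1$ (one of them may degenerate to a ray, not both), and iterates $\mathbb{L}_\theta^{\mathbf a}|_{\mathbb{X}_-}$, $\mathbb{L}_\theta^{\mathbf b}|_{\mathbb{X}_+}$ realizing the first return of points of $\mathbb{X}_-\cup\mathbb{X}_+$ to $\mathbb{X}$; the gluing map $z\mapsto z^{1/\omega}$ ($\omega$ the angle of $\mathbb{X}$) projects this pair to a new rotation. The associated renormalization triangulation of $\overline{\mathbb{D}}$ is the collection of sectors $\mathbb{L}_\theta^{i}(\mathbb{X}_-)$, $0\le i\le\mathbf a-1$, and $\mathbb{L}_\theta^{i}(\mathbb{X}_+)$, $0\le i\le\mathbf b-1$. *)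

theory Defs
  imports "HOL-Analysis.Analysis"
begin

text \<open>Finite continued fraction [0; a_k, a_(k+1), ..., a_(k+n-1)].\<close>
fun cf_aux :: "(nat \<Rightarrow> nat) \<Rightarrow> nat \<Rightarrow> nat \<Rightarrow> real" where
  "cf_aux a k 0 = 0"
| "cf_aux a k (Suc n) = 1 / (real (a k) + cf_aux a (Suc k) n)"

definition cf_conv :: "(nat \<Rightarrow> nat) \<Rightarrow> nat \<Rightarrow> real" where
  "cf_conv a n = cf_aux a 1 n"

text \<open>Theta_N, angles taken modulo 1 (theta real, read in R/Z).\<close>
definition Theta :: "nat \<Rightarrow> real set" where
  "Theta N = {\<theta>. \<exists>(a :: nat \<Rightarrow> nat) x.
      (\<forall>i\<ge>1. 1 \<le> a i \<and> a i \<le> N) \<and> cf_conv a \<longlonglongrightarrow> x \<and>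
      (\<theta> - x \<in> \<int> \<or> \<theta> - (1 - x) \<in> \<int>)}"

definition rot :: "real \<Rightarrow> complex \<Rightarrow> complex" where
  "rot \<theta> z = cis (2 * pi * \<theta>) * z"

text \<open>Closed sector of the closed unit disk with vertex 0, spanning the arguments
  2 pi phi for phi in [s, s + w] (so its angle at 0 is 2 pi w).\<close>
definition sector :: "real \<Rightarrow> real \<Rightarrow> complex set" where
  "sector s w = {complex_of_real r * cis (2 * pi * \<phi>) | r \<phi>.
      0 \<le> r \<and> r \<le> 1 \<and> s \<le> \<phi> \<and> \<phi> \<le> s + w}"

definition sector_angle :: "complex set \<Rightarrow> real" where
  "sector_angle S = (THE \<omega>. \<exists>s w. 0 \<le> w \<and> w \<le> 1 \<and> S = sector s w \<and> \<omega> = 2 * pi * w)"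

text \<open>Sector renormalization of L_theta: X = Xm \<union> Xp, Xm and Xp closed subsectors
  sharing the ray through 1, at most one degenerate, X a proper sector; the iterates
  L^a on Xm and L^b on Xp realise the first return to X (for points of the interiors
  of the pieces).\<close>
definition sector_renorm :: "real \<Rightarrow> complex set \<Rightarrow> complex set \<Rightarrow> nat \<Rightarrow> nat \<Rightarrow> bool" where
  "sector_renorm \<theta> Xm Xp a b \<longleftrightarrow>
    (\<exists>\<alpha> \<beta>. 0 \<le> \<alpha> \<and> 0 \<le> \<beta> \<and> 0 < \<alpha> + \<beta> \<and> \<alpha> + \<beta> < 1 \<and>
       Xm = sector (- \<alpha>) \<alpha> \<and> Xp = sector 0 \<beta>) \<and>
    1 \<le> a \<and> 1 \<le> b \<and>
    (\<forall>z \<in> interior Xm. (rot \<theta> ^^ a) z \<in> Xm \<union> Xp \<and>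
        (\<forall>k. 0 < k \<and> k < a \<longrightarrow> (rot \<theta> ^^ k) z \<notin> Xm \<union> Xp)) \<and>
    (\<forall>z \<in> interior Xp. (rot \<theta> ^^ b) z \<in> Xm \<union> Xp \<and>
        (\<forall>k. 0 < k \<and> k < b \<longrightarrow> (rot \<theta> ^^ k) z \<notin> Xm \<union> Xp))"

definition renorm_triangulation :: "real \<Rightarrow> complex set \<Rightarrow> complex set \<Rightarrow> nat \<Rightarrow> nat \<Rightarrow> complex set set" where
  "renorm_triangulation \<theta> Xm Xp a b =
     {(rot \<theta> ^^ i) ` Xm | i. i < a} \<union> {(rot \<theta> ^^ i) ` Xp | i. i < b}"

end

theory Submission
  imports Defs
begin


definition SN :: "nat \<Rightarrow> real set" where
  "SN N = {x. \<exists>a::nat\<Rightarrow>nat. (\<forall>i\<ge>1. 1 \<le> a i \<and> a i \<le> N) \<and> cf_conv a \<longlonglongrightarrow> x}"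

lemma cf_aux_bounds:
  assumes "\<forall>i\<ge>k. 1 \<le> a i"
  shows "0 \<le> cf_aux a k n \<and> cf_aux a k n \<le> 1"
  using assms
proof (induction n arbitrary: k)
  case 0 then show ?case by simp
next
  case (Suc n)
  have h: "0 \<le> cf_aux a (Suc k) n \<and> cf_aux a (Suc k) n \<le> 1" using Suc by auto
  have "1 \<le> real (a k)" using Suc.prems by auto
  then show ?case using h by (simp add: divide_simps)
qed

lemma cf_aux_shift: "cf_aux (\<lambda>i. a (Suc i)) k n = cf_aux a (Suc k) n"
  by (induction n arbitrary: k) auto

lemma SN_step:
  assumes "x \<in> SN N"
  shows "\<exists>x'\<in>SN N. \<exists>a1::nat. 1 \<le> a1 \<and> a1 \<le> N \<and> x * (real a1 + x') = 1 \<and>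
          1 / (real N + 1) \<le> x \<and> 0 \<le> x' "
proof -
  obtain a where a: "\<forall>i\<ge>1. 1 \<le> a i \<and> a i \<le> N" and lim: "cf_conv a \<longlonglongrightarrow> x"
    using assms unfolding SN_def by auto
  have a1: "1 \<le> a 1" "a 1 \<le> N" using a by auto
  have b2: "0 \<le> cf_aux a 2 n \<and> cf_aux a 2 n \<le> 1" for n
    by (rule cf_aux_bounds) (use a in auto)
  have eq: "cf_conv a (Suc n) = 1 / (real (a 1) + cf_aux a 2 n)" for n
    by (simp add: cf_conv_def numeral_2_eq_2)
  have lb: "1 / (real N + 1) \<le> cf_conv a (Suc n)" for n
  proof -
    have "real (a 1) + cf_aux a 2 n \<le> real N + 1" using a1 b2[of n] by linarith
    moreover have "0 < real (a 1) + cf_aux a 2 n" using a1 b2[of n] by linarith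
    ultimately show ?thesis unfolding eq by (simp add: frac_le)
  qed
  have limS: "(\<lambda>n. cf_conv a (Suc n)) \<longlonglongrightarrow> x" using lim by (rule LIMSEQ_Suc)
  have xlb: "1 / (real N + 1) \<le> x"
    by (rule LIMSEQ_le_const[OF limS]) (use lb in auto)
  have xpos: "0 < x" using xlb by (smt (verit) divide_pos_pos of_nat_0_le_iff)
  define a' where "a' = (\<lambda>i. a (Suc i))"
  have conv': "cf_conv a' n = 1 / cf_conv a (Suc n) - real (a 1)" for n
  proof -
    have "cf_conv a' n = cf_aux a 2 n" by (simp add: a'_def cf_conv_def cf_aux_shift numeral_2_eq_2)
    moreover have "0 < real (a 1) + cf_aux a 2 n" using a1 b2[of n] by linarith
    ultimately show ?thesis unfolding eq by simp
  qed
  have lim': "cf_conv a' \<longlonglongrightarrow> 1 / x - real (a 1)"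
    unfolding conv' by (intro tendsto_intros limS) (use xpos in auto)
  have "1 / x - real (a 1) \<in> SN N"
    unfolding SN_def using lim' a by (intro CollectI exI[of _ a'] conjI) (auto simp: a'_def)
  moreover have "0 \<le> 1 / x - real (a 1)"
  proof (rule LIMSEQ_le_const[OF lim'])
    show "\<exists>N. \<forall>n\<ge>N. 0 \<le> cf_conv a' n"
      using cf_aux_bounds[of 1 a'] a by (auto simp: cf_conv_def a'_def)
  qed
  ultimately show ?thesis using a1 xlb xpos
    by (intro bexI[of _ "1 / x - real (a 1)"] exI[of _ "a 1"]) (auto simp: field_simps)
qed

lemma SN_props:
  assumes "x \<in> SN N"
  shows "\<exists>x'\<in>SN N. \<exists>a1::nat. 1 \<le> a1 \<and> a1 \<le> N \<and> x * (real a1 + x') = 1 \<and>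
          1 / (real N + 1) \<le> x \<and> 1 / (real N + 1) \<le> x' \<and> x \<le> (real N + 1) / (real N + 2)"
proof -
  obtain x' a1 where x': "x' \<in> SN N" "1 \<le> a1" "a1 \<le> N" "x * (real a1 + x') = 1"
     "1 / (real N + 1) \<le> x" "0 \<le> x'"
    using SN_step[OF assms] by blast
  have lb': "1 / (real N + 1) \<le> x'" using SN_step[OF x'(1)] by blast
  have xe: "x = 1 / (real a1 + x')" using x' by (simp add: field_simps)
  have "(real N + 1) / (real N + 2) = 1 / (1 + 1 / (real N + 1))" by (simp add: field_simps)
  also have "1 / (real a1 + x') \<le> \<dots>"
  proof (rule divide_left_mono)
    have p1: "0 < 1 / (real N + 1)" by simp
    show "1 + 1 / (real N + 1) \<le> real a1 + x'" using x'(2) lb' by linarith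
    show "0 < (real a1 + x') * (1 + 1 / (real N + 1))" using x'(2) lb' p1
      by (intro mult_pos_pos) linarith+
  qed simp
  finally have "x \<le> (real N + 1) / (real N + 2)" unfolding xe .
  then show ?thesis using x' lb' by blast
qed

lemma BA_aux:
  fixes q p :: nat
  assumes "x \<in> SN N" "1 \<le> q" "0 \<le> A" "0 \<le> B" "B \<le> 1" "A + B * x = 1"
  shows "1 / ((real N + 2) * (real N + 2)) \<le> \<bar>real q * x - real p\<bar> * (A * real q + B * real p)"
  using assms
proof (induction q arbitrary: x p A B rule: less_induct)
  case (less q)
  obtain x' a1 where x': "x' \<in> SN N" "1 \<le> a1" "a1 \<le> N" "x * (real a1 + x') = 1"
     "1 / (real N + 1) \<le> x" "1 / (real N + 1) \<le> x'" "x \<le> (real N + 1) / (real N + 2)"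
    using SN_props[OF less.prems(1)] by blast
  define K where "K = real N"
  have K1: "1 \<le> K" using x' unfolding K_def by linarith
  have p0: "0 < 1 / (real N + 1)" by simp
  have xpos: "0 < x" "0 < x'" using x'(5,6) p0 by linarith+
  have x1: "x < 1"
  proof -
    have "x * (K + 2) \<le> K + 1" using x'(7) K1 unfolding K_def by (simp add: divide_simps)
    hence "x * (K + 2) < 1 * (K + 2)" by simp
    thus ?thesis using K1 by (simp only: mult_less_cancel_right)
  qed
  have Bx0: "0 \<le> B * x" using less.prems xpos by simp
  have A1: "A \<le> 1" using less.prems Bx0 by linarith
  have Alb: "1 / (K + 2) \<le> A"
  proof -
    have "B * x \<le> x" using less.prems xpos by (simp add: mult_left_le_one_le)
    hence "1 - x \<le> A" using less.prems by linarith
    moreover have "1 / (K + 2) \<le> 1 - x" using x'(7) K1 unfolding K_def by (simp add: field_simps)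
    ultimately show ?thesis by linarith
  qed
  define c where "c = 1 / ((K + 2) * (K + 2))"
  have cle1: "c \<le> 1 / (K + 2) * (1 / (K + 2))" unfolding c_def using K1 by (simp add: field_simps)
  have cle2: "c \<le> 1 / K * (1 / (K + 2))"
  proof -
    have "1 / ((K + 2) * (K + 2)) \<le> 1 / (K * (K + 2))"
      by (rule frac_le) (use K1 in \<open>auto intro: mult_mono\<close>)
    thus ?thesis unfolding c_def by simp
  qed
  have cle3: "c \<le> 1 / (K + 2) * (1 / (K + 1))"
  proof -
    have "1 / ((K + 2) * (K + 2)) \<le> 1 / ((K + 2) * (K + 1))"
      by (rule frac_le) (use K1 in \<open>auto intro: mult_mono\<close>)
    thus ?thesis unfolding c_def by simp
  qed
  have q1: "1 \<le> real q" using less.prems by simp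
  have h2: "1 / (K + 2) \<le> A * real q + B * real p"
  proof -
    have "A * 1 \<le> A * real q" using q1 less.prems by (intro mult_left_mono) auto
    moreover have "0 \<le> B * real p" using less.prems by simp
    ultimately show ?thesis using Alb by linarith
  qed
  have goal: "c \<le> \<bar>real q * x - real p\<bar> * (A * real q + B * real p)"
  proof (cases "p = 0")
    case True
    have "A * x \<le> (A * real q) * (real q * x)"
    proof -
      have "A * x * 1 \<le> A * x * (real q * real q)"
      proof (rule mult_left_mono)
        show "1 \<le> real q * real q" using q1 mult_mono[of 1 "real q" 1 "real q"] by simp
      qed (use xpos less.prems in auto)
      thus ?thesis by (simp add: algebra_simps)
    qed
    moreover have "c \<le> A * x"
    proof -
      have "1 / (K + 2) * (1 / (K + 1)) \<le> A * x"
        by (rule mult_mono) (use Alb x'(5) K1 less.prems in \<open>auto simp: K_def\<close>)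
      thus ?thesis using cle3 by linarith
    qed
    ultimately show ?thesis using True xpos q1 by (simp add: abs_mult mult.commute)
  next
    case p0: False
    show ?thesis
    proof (cases "q \<le> p")
      case True
      have "1 / (K + 2) \<le> 1 - x" using x'(7) K1 unfolding K_def by (simp add: field_simps)
      also have "1 - x \<le> real q * (1 - x)" using q1 x1 by (simp add: mult_le_cancel_right1)
      also have "\<dots> \<le> \<bar>real q * x - real p\<bar>" using True by (simp add: algebra_simps)
      finally have h1: "1 / (K + 2) \<le> \<bar>real q * x - real p\<bar>" .
      have "1 / (K + 2) * (1 / (K + 2)) \<le> \<bar>real q * x - real p\<bar> * (A * real q + B * real p)"
        using h1 h2 K1 by (intro mult_mono) auto
      thus ?thesis using cle1 by linarith
    next
      case qp: False
      show ?thesis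
      proof (cases "q < a1 * p")
        case True
        have "x * real a1 < 1"
        proof -
          have "x * real a1 + x * x' = 1" using x'(4) by (simp add: distrib_left)
          moreover have "0 < x * x'" using xpos by simp
          ultimately show ?thesis by linarith
        qed
        hence "real q * (x * real a1) < real q * 1" using q1
          by (intro mult_strict_left_mono) auto
        hence "real q * x * real a1 < real q" by (simp add: mult.assoc)
        moreover have "real q + 1 \<le> real a1 * real p"
        proof -
          have "q + 1 \<le> a1 * p" using True by simp
          hence "real (q + 1) \<le> real (a1 * p)" by (simp only: of_nat_le_iff)
          thus ?thesis by simp
        qed
        ultimately have le1: "real q * x * real a1 + 1 \<le> real a1 * real p" by linarith
        have a1pos: "0 < real a1" using x'(2) by simp
        have "real q * x + 1 / real a1 = (real q * x * real a1 + 1) / real a1"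
          using a1pos by (simp add: field_simps)
        also have "\<dots> \<le> (real a1 * real p) / real a1"
          using le1 a1pos by (intro divide_right_mono) auto
        also have "\<dots> = real p" using a1pos by simp
        finally have "real q * x + 1 / real a1 \<le> real p" .
        moreover have "1 / K \<le> 1 / real a1" using x'(2,3) unfolding K_def by (simp add: frac_le)
        ultimately have h1: "1 / K \<le> \<bar>real q * x - real p\<bar>" by linarith
        have "1 / K * (1 / (K + 2)) \<le> \<bar>real q * x - real p\<bar> * (A * real q + B * real p)"
          using h1 h2 K1 by (intro mult_mono) auto
        thus ?thesis using cle2 by linarith
      next
        case False
        define p' where "p' = q - a1 * p"
        have xs: "x * real a1 + x * x' = 1" using x'(4) by (simp add: distrib_left)
        have p'e: "real p' = real q - real a1 * real p" using False unfolding p'_def by (simp add: of_nat_diff)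
        define A' where "A' = 1 - A * x * x'"
        define B' where "B' = A * x"
        have B'1: "B' \<le> 1" unfolding B'_def using A1 x1 xpos less.prems
          by (intro mult_le_one) auto
        have B'0: "0 \<le> B'" unfolding B'_def using less.prems xpos by simp
        have "A * x * x' \<le> 1"
        proof -
          have "x * real a1 + x * x' = 1" using x'(4) by (simp add: distrib_left)
          moreover have "0 \<le> x * real a1" using xpos by simp
          ultimately have "x * x' \<le> 1" by linarith
          moreover have "0 \<le> x * x'" using xpos by simp
          ultimately have "A * (x * x') \<le> 1" using A1 less.prems by (rule_tac mult_le_one) auto
          thus ?thesis by (simp add: mult.assoc)
        qed
        hence A'0: "0 \<le> A'" unfolding A'_def by simp
        have sum': "A' + B' * x' = 1" unfolding A'_def B'_def by simp
        have IH: "c \<le> \<bar>real p * x' - real p'\<bar> * (A' * real p + B' * real p')"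
          unfolding c_def K_def
        proof (rule less.IH)
          show "p < q" using qp by simp
          show "1 \<le> p" using p0 by simp
        qed (use x'(1) A'0 B'0 B'1 sum' in auto)
        have e1: "\<bar>real q * x - real p\<bar> = x * \<bar>real p * x' - real p'\<bar>"
        proof -
          have "real q * x - real p = - x * (real p * x' - real p')"
          proof -
            have "- x * (real p * x' - (real q - real a1 * real p))
                 = real q * x - real p * (x * real a1 + x * x')" by (simp add: algebra_simps)
            thus ?thesis unfolding p'e xs by simp
          qed
          thus ?thesis using xpos by (simp add: abs_mult)
        qed
        have e2: "x * (A * real q + B * real p) = A' * real p + B' * real p'"
        proof -
          have l: "x * (A * real q + B * real p) = A * x * real q + (B * x) * real p"
            by (simp add: algebra_simps)
          have r: "(1 - A * x * x') * real p + A * x * (real q - real a1 * real p)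
             = real p + A * x * real q - A * real p * (x * real a1 + x * x')"
            by (simp add: algebra_simps)
          have bx: "B * x = 1 - A" using less.prems(6) by linarith
          show ?thesis unfolding p'e A'_def B'_def l r bx xs by (simp add: algebra_simps)
        qed
        have "\<bar>real q * x - real p\<bar> * (A * real q + B * real p)
              = \<bar>real p * x' - real p'\<bar> * (A' * real p + B' * real p')"
          unfolding e1 e2[symmetric] by (simp add: algebra_simps)
        thus ?thesis using IH by simp
      qed
    qed
  qed
  then show ?case unfolding c_def K_def .
qed



lemma BA_x:
  fixes q :: nat and p :: int
  assumes "x \<in> SN N" "1 \<le> q"
  shows "1 / ((real N + 2) * (real N + 2)) / real q \<le> \<bar>real q * x - of_int p\<bar>"
proof -
  define c where "c = 1 / ((real N + 2) * (real N + 2))"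
  have "1 \<le> (real N + 2) * (real N + 2)" using mult_mono[of 1 "real N + 2" 1 "real N + 2"] by simp
  hence c1: "c \<le> 1" "0 \<le> c" unfolding c_def by auto
  have q1: "1 \<le> real q" using assms by simp
  have "1 / (real N + 1) \<le> x" using SN_props[OF assms(1)] by blast
  moreover have "0 < 1 / (real N + 1)" by simp
  ultimately have xpos: "0 < x" by linarith
  show ?thesis
  proof (cases "p < 0")
    case True
    have "c / real q \<le> 1" using c1 q1 by (simp add: divide_le_eq_1) 
    also have "1 \<le> real q * x - of_int p"
    proof -
      have "0 \<le> real q * x" using xpos by simp
      moreover have "of_int p \<le> (-1::real)" using True by simp
      ultimately show ?thesis by linarith
    qed
    finally show ?thesis unfolding c_def by linarith
  next
    case False
    then obtain n where n: "p = int n" by (metis nonneg_int_cases not_less)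
    have "c \<le> \<bar>real q * x - real n\<bar> * (1 * real q + 0 * real n)"
      unfolding c_def by (rule BA_aux) (use assms in auto)
    hence "c / real q \<le> \<bar>real q * x - real n\<bar>" using q1 by (simp add: divide_simps)
    thus ?thesis unfolding n c_def by simp
  qed
qed

lemma BA_theta:
  fixes q :: nat and p :: int
  assumes "\<theta> \<in> Theta N" "1 \<le> q"
  shows "1 / ((real N + 2) * (real N + 2)) / real q \<le> \<bar>real q * \<theta> - of_int p\<bar>"
proof -
  obtain a x where ax: "\<forall>i\<ge>1. 1 \<le> a i \<and> a i \<le> N" "cf_conv a \<longlonglongrightarrow> x"
      "\<theta> - x \<in> \<int> \<or> \<theta> - (1 - x) \<in> \<int>"
    using assms(1) unfolding Theta_def by blast
  have xS: "x \<in> SN N" unfolding SN_def using ax by blast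
  from ax(3) show ?thesis
  proof
    assume "\<theta> - x \<in> \<int>"
    then obtain m where m: "\<theta> - x = of_int m" by (metis Ints_cases)
    have te: "\<theta> = x + of_int m" using m by simp
    have "real q * \<theta> - of_int p = real q * x - of_int (p - int q * m)"
      unfolding te by (simp add: algebra_simps)
    thus ?thesis using BA_x[OF xS assms(2), of "p - int q * m"] by simp
  next
    assume "\<theta> - (1 - x) \<in> \<int>"
    then obtain m where m: "\<theta> - (1 - x) = of_int m" by (metis Ints_cases)
    have te: "\<theta> = 1 - x + of_int m" using m by simp
    have "real q * \<theta> - of_int p = - (real q * x - of_int (int q + int q * m - p))"
      unfolding te by (simp add: algebra_simps)
    thus ?thesis using BA_x[OF xS assms(2), of "int q + int q * m - p"] by simp
  qed
qed

lemma rot_pow: "(rot \<theta> ^^ k) z = cis (2 * pi * (real k * \<theta>)) * z"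
proof (induction k arbitrary: z)
  case 0 then show ?case by simp
next
  case (Suc k)
  have "(rot \<theta> ^^ Suc k) z = rot \<theta> ((rot \<theta> ^^ k) z)" by simp
  also have "\<dots> = cis (2 * pi * \<theta>) * (cis (2 * pi * (real k * \<theta>)) * z)"
    by (simp only: Suc.IH rot_def)
  also have "\<dots> = cis (2 * pi * (real (Suc k) * \<theta>)) * z"
  proof -
    have "cis (2 * pi * \<theta>) * (cis (2 * pi * (real k * \<theta>)) * z)
        = cis (2 * pi * \<theta> + 2 * pi * (real k * \<theta>)) * z"
      by (simp only: mult.assoc[symmetric] cis_mult)
    also have "2 * pi * \<theta> + 2 * pi * (real k * \<theta>) = 2 * pi * (real (Suc k) * \<theta>)"
      by (simp add: algebra_simps)
    finally show ?thesis .
  qed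
  finally show ?case .
qed

lemma cis_eq_iff: "cis a = cis b \<longleftrightarrow> (\<exists>n::int. a = b + 2 * pi * of_int n)"
proof -
  have "cis a = cis b \<longleftrightarrow> sin a = sin b \<and> cos a = cos b" by (auto simp: complex_eq_iff)
  also have "\<dots> \<longleftrightarrow> (\<exists>n::int. a = b + 2 * pi * of_int n)" by (rule sin_cos_eq_iff)
  finally show ?thesis .
qed

lemma cis_shift_int: "cis (2 * pi * (\<psi> + of_int k)) = cis (2 * pi * \<psi>)"
  unfolding cis_eq_iff by (rule exI[of _ k]) (simp add: algebra_simps)

lemma mem_sector:
  assumes "0 < \<rho>"
  shows "complex_of_real \<rho> * cis (2 * pi * \<psi>) \<in> sector s w \<longleftrightarrow>
         \<rho> \<le> 1 \<and> (\<exists>k::int. s \<le> \<psi> + k \<and> \<psi> + k \<le> s + w)"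
proof
  assume "complex_of_real \<rho> * cis (2 * pi * \<psi>) \<in> sector s w"
  then obtain r \<phi> where e: "complex_of_real \<rho> * cis (2 * pi * \<psi>) = complex_of_real r * cis (2 * pi * \<phi>)"
    and r: "0 \<le> r" "r \<le> 1" "s \<le> \<phi>" "\<phi> \<le> s + w"
    unfolding sector_def by blast
  have "norm (complex_of_real \<rho> * cis (2 * pi * \<psi>)) = norm (complex_of_real r * cis (2 * pi * \<phi>))"
    using e by simp
  hence rr: "r = \<rho>" using assms r by (simp add: norm_mult)
  hence "cis (2 * pi * \<psi>) = cis (2 * pi * \<phi>)" using e assms by simp
  then obtain n :: int where "2 * pi * \<psi> = 2 * pi * \<phi> + 2 * pi * of_int n"
    unfolding cis_eq_iff by blast
  hence "2 * pi * \<psi> = 2 * pi * (\<phi> + of_int n)" by (simp add: distrib_left)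
  hence "\<psi> = \<phi> + of_int n" by simp
  hence "s \<le> \<psi> + of_int (- n) \<and> \<psi> + of_int (- n) \<le> s + w" using r by simp
  thus "\<rho> \<le> 1 \<and> (\<exists>k::int. s \<le> \<psi> + k \<and> \<psi> + k \<le> s + w)" using rr r by blast
next
  assume "\<rho> \<le> 1 \<and> (\<exists>k::int. s \<le> \<psi> + k \<and> \<psi> + k \<le> s + w)"
  then obtain k :: int where k: "\<rho> \<le> 1" "s \<le> \<psi> + k" "\<psi> + k \<le> s + w" by blast
  have "complex_of_real \<rho> * cis (2 * pi * \<psi>) = complex_of_real \<rho> * cis (2 * pi * (\<psi> + of_int k))"
    by (simp only: cis_shift_int)
  thus "complex_of_real \<rho> * cis (2 * pi * \<psi>) \<in> sector s w"
    unfolding sector_def using k assms by force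
qed

lemma rot_image_sector: "(rot \<theta> ^^ i) ` sector s w = sector (s + real i * \<theta>) w"
proof -
  have e: "(rot \<theta> ^^ i) (complex_of_real r * cis (2 * pi * \<phi>))
         = complex_of_real r * cis (2 * pi * (\<phi> + real i * \<theta>))" for r \<phi>
  proof -
    have "(rot \<theta> ^^ i) (complex_of_real r * cis (2 * pi * \<phi>))
        = complex_of_real r * (cis (2 * pi * (real i * \<theta>)) * cis (2 * pi * \<phi>))"
      unfolding rot_pow by (simp only: mult_ac)
    also have "cis (2 * pi * (real i * \<theta>)) * cis (2 * pi * \<phi>) = cis (2 * pi * (\<phi> + real i * \<theta>))"
      by (simp only: cis_mult) (simp add: algebra_simps)
    finally show ?thesis .
  qed
  show ?thesis
  proof
    show "(rot \<theta> ^^ i) ` sector s w \<subseteq> sector (s + real i * \<theta>) w"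
      unfolding sector_def using e by force
    show "sector (s + real i * \<theta>) w \<subseteq> (rot \<theta> ^^ i) ` sector s w"
    proof
      fix z assume "z \<in> sector (s + real i * \<theta>) w"
      then obtain r \<phi> where z: "z = complex_of_real r * cis (2 * pi * \<phi>)" "0 \<le> r" "r \<le> 1"
        "s + real i * \<theta> \<le> \<phi>" "\<phi> \<le> s + real i * \<theta> + w" unfolding sector_def by blast
      have "z = (rot \<theta> ^^ i) (complex_of_real r * cis (2 * pi * (\<phi> - real i * \<theta>)))"
        using e[of r "\<phi> - real i * \<theta>"] z by simp
      moreover have "complex_of_real r * cis (2 * pi * (\<phi> - real i * \<theta>)) \<in> sector s w"
        unfolding sector_def using z by force
      ultimately show "z \<in> (rot \<theta> ^^ i) ` sector s w" by blast
    qed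
  qed
qed

lemma sector_w_le:
  assumes "sector s w = sector s' w'" "0 \<le> w" "w \<le> 1" "0 \<le> w'" "w' \<le> 1"
  shows "w \<le> w'"
proof (rule ccontr)
  assume "\<not> w \<le> w'"
  hence lt: "w' < w" by simp
  have mem: "(\<exists>k::int. s \<le> \<psi> + k \<and> \<psi> + k \<le> s + w) \<longleftrightarrow> (\<exists>k::int. s' \<le> \<psi> + k \<and> \<psi> + k \<le> s' + w')" for \<psi>
    using mem_sector[of 1 \<psi> s w] mem_sector[of 1 \<psi> s' w'] assms(1) by simp
  have "\<exists>k::int. s \<le> s + k \<and> s + k \<le> s + w" using assms by (intro exI[of _ 0]) simp
  then obtain k :: int where k: "s' \<le> s + k" "s + k \<le> s' + w'" using mem[of s] by blast
  define \<delta> where "\<delta> = (w - w') / 2"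
  have d: "0 < \<delta>" "w' + \<delta> < 1" "w' + \<delta> \<le> w" using lt assms unfolding \<delta>_def by (auto simp: field_simps)
  define \<psi> where "\<psi> = s' + w' + \<delta> - k"
  have "\<exists>k::int. s \<le> \<psi> + k \<and> \<psi> + k \<le> s + w"
    using k d unfolding \<psi>_def by (intro exI[of _ 0]) auto
  then obtain m :: int where m: "s' \<le> \<psi> + m" "\<psi> + m \<le> s' + w'" using mem[of \<psi>] by blast
  have "real_of_int (m - k) \<le> - \<delta>" using m(2) unfolding \<psi>_def by simp
  hence "m - k < 0" using d by linarith
  hence "real_of_int (m - k) \<le> -1" by linarith
  moreover have "- w' - \<delta> \<le> real_of_int (m - k)" using m(1) unfolding \<psi>_def by simp
  ultimately show False using d by linarith
qed

lemma sector_angle_eq: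
  assumes "0 \<le> w" "w \<le> 1"
  shows "sector_angle (sector s w) = 2 * pi * w"
  unfolding sector_angle_def
proof (rule the_equality)
  show "\<exists>s' w'. 0 \<le> w' \<and> w' \<le> 1 \<and> sector s w = sector s' w' \<and> 2 * pi * w = 2 * pi * w'"
    using assms by blast
next
  fix \<omega> assume "\<exists>s' w'. 0 \<le> w' \<and> w' \<le> 1 \<and> sector s w = sector s' w' \<and> \<omega> = 2 * pi * w'"
  then obtain s' w' where h: "0 \<le> w'" "w' \<le> 1" "sector s w = sector s' w'" "\<omega> = 2 * pi * w'" by blast
  have "w = w'" using sector_w_le[OF h(3) assms h(1,2)] sector_w_le[OF h(3)[symmetric] h(1,2) assms] by simp
  thus "\<omega> = 2 * pi * w" using h by simp
qed



lemma interior_pt: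
  assumes "0 < \<rho>" "\<rho> < 1" "s < \<psi>" "\<psi> < s + w"
  shows "complex_of_real \<rho> * cis (2 * pi * \<psi>) \<in> interior (sector s w)"
proof -
  define c0 where "c0 = cis (2 * pi * \<psi>)"
  have c0n: "c0 \<noteq> 0" "norm c0 = 1" unfolding c0_def by auto
  define \<delta> where "\<delta> = 2 * pi * min (\<psi> - s) (s + w - \<psi>)"
  have dpos: "0 < \<delta>" unfolding \<delta>_def using assms by simp
  define f where "f = (\<lambda>z::complex. z / c0)"
  have fc: "continuous_on A f" for A unfolding f_def by (intro continuous_intros) (use c0n in auto)
  define S0 where "S0 = ball 0 1 \<inter> f -` (- \<real>\<^sub>\<le>\<^sub>0)"
  have oS0: "open S0" unfolding S0_def
    by (rule continuous_open_preimage[OF fc]) (auto simp: open_Compl)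
  define U where "U = S0 \<inter> (\<lambda>z. Arg (f z)) -` {-\<delta><..<\<delta>}"
  have oU: "open U" unfolding U_def
  proof (rule continuous_open_preimage)
    show "continuous_on S0 (\<lambda>z. Arg (f z))"
      by (rule continuous_on_Arg'[OF fc]) (auto simp: S0_def)
  qed (use oS0 in auto)
  have inU: "complex_of_real \<rho> * c0 \<in> U"
  proof -
    have fe: "f (complex_of_real \<rho> * c0) = complex_of_real \<rho>" unfolding f_def using c0n by simp
    have "norm (complex_of_real \<rho> * c0) < 1" using c0n assms by (simp add: norm_mult)
    thus ?thesis unfolding U_def S0_def using fe assms dpos by simp
  qed
  have sub: "U \<subseteq> sector s w"
  proof
    fix z assume z: "z \<in> U"
    define u where "u = f z"
    have u0: "u \<noteq> 0" using z unfolding U_def S0_def u_def by auto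
    have nz: "norm z < 1" using z unfolding U_def S0_def by auto
    have au: "-\<delta> < Arg u" "Arg u < \<delta>" using z unfolding U_def u_def by auto
    have ze: "z = u * c0" unfolding u_def f_def using c0n by simp
    have nu: "norm u = norm z" using ze c0n by (simp add: norm_mult)
    have "z = complex_of_real (norm z) * (cis (Arg u) * c0)"
      using Arg_eq[OF u0] ze nu by (simp add: cis_conv_exp mult.assoc)
    also have "cis (Arg u) * c0 = cis (2 * pi * (\<psi> + Arg u / (2 * pi)))"
      unfolding c0_def by (simp add: cis_mult algebra_simps)
    finally have zf: "z = complex_of_real (norm z) * cis (2 * pi * (\<psi> + Arg u / (2 * pi)))" .
    have dd: "\<delta> / (2 * pi) = min (\<psi> - s) (s + w - \<psi>)" unfolding \<delta>_def by simp
    have "Arg u / (2 * pi) < \<delta> / (2 * pi)" using au by (intro divide_strict_right_mono) auto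
    moreover have "- \<delta> / (2 * pi) < Arg u / (2 * pi)" using au by (intro divide_strict_right_mono) auto
    ultimately have "Arg u / (2 * pi) < min (\<psi> - s) (s + w - \<psi>)" "- min (\<psi> - s) (s + w - \<psi>) < Arg u / (2 * pi)"
      unfolding dd[symmetric] by auto
    hence "s \<le> \<psi> + Arg u / (2 * pi)" "\<psi> + Arg u / (2 * pi) \<le> s + w" by auto
    thus "z \<in> sector s w" unfolding sector_def using zf nz by force
  qed
  show ?thesis unfolding c0_def[symmetric] by (rule interiorI[OF oU inU sub])
qed

lemma gap:
  fixes K :: int and \<alpha> \<beta> m \<rho> :: real
  assumes "\<beta> < m" "m < 1 - \<alpha>" "0 \<le> \<beta>" "0 < \<rho>" "0 \<le> \<alpha>"
  shows "complex_of_real \<rho> * cis (2 * pi * (m + K)) \<notin> sector (- \<alpha>) \<alpha> \<union> sector 0 \<beta>"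
proof
  assume "complex_of_real \<rho> * cis (2 * pi * (m + K)) \<in> sector (- \<alpha>) \<alpha> \<union> sector 0 \<beta>"
  then obtain k :: int where k: "(- \<alpha> \<le> m + K + k \<and> m + K + k \<le> - \<alpha> + \<alpha>) \<or> (0 \<le> m + K + k \<and> m + K + k \<le> 0 + \<beta>)"
    unfolding Un_iff mem_sector[OF assms(4)] by blast
  define j where "j = K + k"
  have k': "(- \<alpha> \<le> m + j \<and> m + j \<le> 0) \<or> (0 \<le> m + j \<and> m + j \<le> \<beta>)"
    using k unfolding j_def by (simp add: add.assoc)
  consider "j \<ge> 1" | "j = 0" | "j \<le> -1" by linarith
  then show False
  proof cases
    case 1 hence "real_of_int j \<ge> 1" by simp
    then show False using k' assms by linarith
  next
    case 2 then show False using k' assms by simp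
  next
    case 3 hence "real_of_int j \<le> -1" by simp
    then show False using k' assms by linarith
  qed
qed



lemma rot_pt: "(rot \<theta> ^^ k) (complex_of_real \<rho> * cis (2 * pi * \<phi>))
         = complex_of_real \<rho> * cis (2 * pi * (\<phi> + real k * \<theta>))"
proof -
  have "(rot \<theta> ^^ k) (complex_of_real \<rho> * cis (2 * pi * \<phi>))
      = complex_of_real \<rho> * (cis (2 * pi * (real k * \<theta>)) * cis (2 * pi * \<phi>))"
    unfolding rot_pow by (simp only: mult_ac)
  also have "cis (2 * pi * (real k * \<theta>)) * cis (2 * pi * \<phi>) = cis (2 * pi * (\<phi> + real k * \<theta>))"
    by (simp only: cis_mult) (simp add: algebra_simps)
  finally show ?thesis .
qed

lemma H1:
  fixes p :: int
  assumes hyp: "\<forall>z \<in> interior (sector l L). (\<forall>k. 0 < k \<and> k < n \<longrightarrow> (rot \<theta> ^^ k) z \<notin> X)"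
    and sub: "sector l L \<subseteq> X" and k: "0 < k" "k < n"
  shows "L \<le> \<bar>real k * \<theta> - of_int p\<bar>"
proof (rule ccontr)
  assume "\<not> L \<le> \<bar>real k * \<theta> - of_int p\<bar>"
  hence dl: "\<bar>real k * \<theta> - of_int p\<bar> < L" by simp
  define d where "d = real k * \<theta> - of_int p"
  define \<phi> where "\<phi> = l + L / 2 - d / 2"
  have dl2: "- L < d" "d < L" using dl unfolding d_def by (auto simp: abs_less_iff)
  have ph: "l < \<phi>" "\<phi> < l + L" using dl2 unfolding \<phi>_def by linarith+
  define z where "z = complex_of_real (1/2) * cis (2 * pi * \<phi>)"
  have zi: "z \<in> interior (sector l L)" unfolding z_def by (rule interior_pt) (use ph in auto)
  have eq: "(rot \<theta> ^^ k) z = complex_of_real (1/2) * cis (2 * pi * (\<phi> + real k * \<theta>))"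
    unfolding z_def by (rule rot_pt)
  have "complex_of_real (1/2) * cis (2 * pi * (\<phi> + real k * \<theta>)) \<in> sector l L"
  proof -
    have "l \<le> \<phi> + real k * \<theta> + of_int (- p)" "\<phi> + real k * \<theta> + of_int (- p) \<le> l + L"
    proof -
      have e: "\<phi> + real k * \<theta> + of_int (- p) = l + L / 2 + d / 2" unfolding \<phi>_def d_def by (simp add: field_simps)
      show "l \<le> \<phi> + real k * \<theta> + of_int (- p)" unfolding e using dl2 by linarith
      show "\<phi> + real k * \<theta> + of_int (- p) \<le> l + L" unfolding e using dl2 by linarith
    qed
    thus ?thesis unfolding mem_sector[OF half_gt_zero[OF zero_less_one]] by (intro conjI exI[of _ "- p"]) auto
  qed
  hence "(rot \<theta> ^^ k) z \<in> sector l L" by (simp only: eq)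
  hence "(rot \<theta> ^^ k) z \<in> X" using sub by blast
  thus False using hyp zi k by blast
qed

lemma H2:
  assumes hyp: "\<forall>z \<in> interior (sector l L). (rot \<theta> ^^ n) z \<in> sector (- \<alpha>) \<alpha> \<union> sector 0 \<beta>"
    and a: "0 \<le> \<alpha>" "0 \<le> \<beta>" "\<alpha> + \<beta> < 1" "0 < L"
  shows "\<exists>j::int. - \<alpha> \<le> l + real n * \<theta> + j \<and> l + L + real n * \<theta> + j \<le> \<beta>"
proof -
  define y where "y = l + real n * \<theta>"
  define F where "F = \<lfloor>y + \<alpha>\<rfloor>"
  define y0 where "y0 = y - F"
  have y0: "- \<alpha> \<le> y0" "y0 < 1 - \<alpha>" unfolding y0_def F_def
    using floor_correct[of "y + \<alpha>"] by linarith+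
  show ?thesis
  proof (cases "y0 + L \<le> \<beta>")
    case True
    then show ?thesis using y0 unfolding y0_def y_def
      by (intro exI[of _ "- F"]) (simp add: algebra_simps)
  next
    case False
    define lo where "lo = max y0 \<beta>"
    define hi where "hi = min (y0 + L) (1 - \<alpha>)"
    have lh: "lo < hi" unfolding lo_def hi_def using False y0 a by auto
    define m where "m = (lo + hi) / 2"
    have m: "\<beta> < m" "m < 1 - \<alpha>" "y0 < m" "m < y0 + L"
      using lh unfolding m_def lo_def hi_def by auto
    define \<phi> where "\<phi> = m - y0 + l"
    have ph: "l < \<phi>" "\<phi> < l + L" using m unfolding \<phi>_def by auto
    define z where "z = complex_of_real (1/2) * cis (2 * pi * \<phi>)"
    have zi: "z \<in> interior (sector l L)" unfolding z_def by (rule interior_pt) (use ph in auto)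
    have "(rot \<theta> ^^ n) z = complex_of_real (1/2) * cis (2 * pi * (\<phi> + real n * \<theta>))"
      unfolding z_def by (rule rot_pt)
    also have "\<phi> + real n * \<theta> = m + of_int F" unfolding \<phi>_def y0_def y_def by simp
    finally have eq: "(rot \<theta> ^^ n) z = complex_of_real (1/2) * cis (2 * pi * (m + of_int F))" .
    have nin: "complex_of_real (1/2) * cis (2 * pi * (m + of_int F)) \<notin> sector (- \<alpha>) \<alpha> \<union> sector 0 \<beta>"
      by (rule gap) (use m a in auto)
    have "(rot \<theta> ^^ n) z \<in> sector (- \<alpha>) \<alpha> \<union> sector 0 \<beta>" using hyp zi by blast
    hence "complex_of_real (1/2) * cis (2 * pi * (m + of_int F)) \<in> sector (- \<alpha>) \<alpha> \<union> sector 0 \<beta>"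
      by (simp only: eq)
    thus ?thesis using nin by contradiction
  qed
qed

lemma ratio_bound:
  fixes p0 :: int
  assumes th: "\<theta> \<in> Theta N" and n: "1 \<le> n" and L1: "L < 1"
    and H: "\<forall>k (p::int). 0 < k \<and> k < n \<longrightarrow> L \<le> \<bar>real k * \<theta> - of_int p\<bar>"
    and M: "\<bar>real n * \<theta> - of_int p0\<bar> \<le> M"
  shows "L \<le> 2 * (real N + 2) * (real N + 2) * M"
proof -
  define c where "c = 1 / ((real N + 2) * (real N + 2))"
  have cpos: "0 < c" unfolding c_def by simp
  have L2: "L \<le> 2 / real n"
  proof (cases "n = 1")
    case True then show ?thesis using L1 by simp
  next
    case False
    hence n2: "2 \<le> n" using n by simp
    obtain q :: int and p :: "nat \<Rightarrow> int" where q: "0 < q" "q \<le> int ((n - 1) ^ 1)"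
      and qp: "\<And>i. i < 1 \<Longrightarrow> \<bar>of_int q * \<theta> - of_int (p i)\<bar> < 1 / real (n - 1)"
    proof -
      have npos: "n - 1 > 0" using n2 by simp
      show ?thesis
        by (rule Dirichlet_approx_simult[where \<theta>="\<lambda>_. \<theta>" and N="n - 1" and n=1, OF npos], rule that) auto
    qed
    define k where "k = nat q"
    have k: "0 < k" "k < n" using q n2 unfolding k_def by auto
    have "L \<le> \<bar>real k * \<theta> - of_int (p 0)\<bar>" using H k by blast
    also have "real k * \<theta> = of_int q * \<theta>" unfolding k_def using q by simp
    also have "\<bar>of_int q * \<theta> - of_int (p 0)\<bar> < 1 / real (n - 1)" using qp[of 0] by simp
    also have "1 / real (n - 1) \<le> 2 / real n"
    proof -
      have "real n \<le> 2 * real (n - 1)" using n2 by (simp add: of_nat_diff)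
      thus ?thesis using n2 by (simp add: divide_simps of_nat_diff)
    qed
    finally show ?thesis by simp
  qed
  have "c / real n \<le> M" using BA_theta[OF th n, of p0] M unfolding c_def by linarith
  hence "2 / c * (c / real n) \<le> 2 / c * M" using cpos by (intro mult_left_mono) auto
  hence "2 / real n \<le> 2 / c * M" using cpos n by (simp add: field_simps)
  moreover have "2 / c = 2 * (real N + 2) * (real N + 2)" unfolding c_def by simp
  ultimately show ?thesis using L2 by simp
qed



lemma angle_cases:
  assumes "S \<in> renorm_triangulation \<theta> (sector (- \<alpha>) \<alpha>) (sector 0 \<beta>) a b"
    "0 \<le> \<alpha>" "\<alpha> \<le> 1" "0 \<le> \<beta>" "\<beta> \<le> 1"
  shows "sector_angle S = 2 * pi * \<alpha> \<or> sector_angle S = 2 * pi * \<beta>"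
  using assms unfolding renorm_triangulation_def
  by (auto simp: rot_image_sector sector_angle_eq)

lemma key:
  assumes th: "\<theta> \<in> Theta N" and sr: "sector_renorm \<theta> (sector (- \<alpha>) \<alpha>) (sector 0 \<beta>) a b"
    and ab: "0 < \<alpha>" "0 < \<beta>" "\<alpha> + \<beta> < 1"
  shows "\<alpha> \<le> 2 * (real N + 2) * (real N + 2) * \<beta> \<and> \<beta> \<le> 2 * (real N + 2) * (real N + 2) * \<alpha>"
proof -
  define X where "X = sector (- \<alpha>) \<alpha> \<union> sector 0 \<beta>"
  have a1: "1 \<le> a" "1 \<le> b" using sr unfolding sector_renorm_def by auto
  have hm: "\<forall>z\<in>interior (sector (- \<alpha>) \<alpha>). (rot \<theta> ^^ a) z \<in> X \<and>
        (\<forall>k. 0 < k \<and> k < a \<longrightarrow> (rot \<theta> ^^ k) z \<notin> X)"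
    using sr unfolding sector_renorm_def X_def by blast
  have hp: "\<forall>z\<in>interior (sector 0 \<beta>). (rot \<theta> ^^ b) z \<in> X \<and>
        (\<forall>k. 0 < k \<and> k < b \<longrightarrow> (rot \<theta> ^^ k) z \<notin> X)"
    using sr unfolding sector_renorm_def X_def by blast
  have 1: "\<alpha> \<le> 2 * (real N + 2) * (real N + 2) * \<beta>"
  proof -
    obtain j :: int where j: "- \<alpha> \<le> - \<alpha> + real a * \<theta> + j" "- \<alpha> + \<alpha> + real a * \<theta> + j \<le> \<beta>"
      using H2[where l="- \<alpha>" and L=\<alpha> and \<theta>=\<theta> and n=a and \<alpha>=\<alpha> and \<beta>=\<beta>] hm ab unfolding X_def by auto
    have M: "\<bar>real a * \<theta> - of_int (- j)\<bar> \<le> \<beta>" using j ab by auto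
    have H: "\<forall>k (p::int). 0 < k \<and> k < a \<longrightarrow> \<alpha> \<le> \<bar>real k * \<theta> - of_int p\<bar>"
    proof (intro allI impI)
      fix k and p :: int assume "0 < k \<and> k < a"
      thus "\<alpha> \<le> \<bar>real k * \<theta> - of_int p\<bar>"
        using H1[where l="- \<alpha>" and L=\<alpha> and n=a and \<theta>=\<theta> and X=X and k=k and p=p] hm unfolding X_def by blast
    qed
    show ?thesis by (rule ratio_bound[OF th a1(1) _ H M]) (use ab in auto)
  qed
  have 2: "\<beta> \<le> 2 * (real N + 2) * (real N + 2) * \<alpha>"
  proof -
    obtain j :: int where j: "- \<alpha> \<le> 0 + real b * \<theta> + j" "0 + \<beta> + real b * \<theta> + j \<le> \<beta>"
      using H2[where l=0 and L=\<beta> and \<theta>=\<theta> and n=b and \<alpha>=\<alpha> and \<beta>=\<beta>] hp ab unfolding X_def by auto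
    have M: "\<bar>real b * \<theta> - of_int (- j)\<bar> \<le> \<alpha>" using j ab by auto
    have H: "\<forall>k (p::int). 0 < k \<and> k < b \<longrightarrow> \<beta> \<le> \<bar>real k * \<theta> - of_int p\<bar>"
    proof (intro allI impI)
      fix k and p :: int assume "0 < k \<and> k < b"
      thus "\<beta> \<le> \<bar>real k * \<theta> - of_int p\<bar>"
        using H1[where l=0 and L=\<beta> and n=b and \<theta>=\<theta> and X=X and k=k and p=p] hp unfolding X_def by blast
    qed
    show ?thesis by (rule ratio_bound[OF th a1(2) _ H M]) (use ab in auto)
  qed
  show ?thesis using 1 2 by blast
qed

theorem lemmaA3:
  fixes N :: nat
  shows "\<exists>t>1. \<forall>\<theta> Xm Xp a b.
    \<theta> \<in> Theta N \<and> sector_renorm \<theta> Xm Xp a b \<longrightarrow>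
    (\<forall>S \<in> renorm_triangulation \<theta> Xm Xp a b. \<forall>T \<in> renorm_triangulation \<theta> Xm Xp a b.
       0 < sector_angle S \<and> 0 < sector_angle T \<longrightarrow>
       sector_angle S / sector_angle T \<in> {1/t..t})"
proof -
  define t where "t = 2 * (real N + 2) * (real N + 2)"
  have h4: "4 \<le> (real N + 2) * (real N + 2)"
    using mult_mono[of 2 "real N + 2" 2 "real N + 2"] by simp
  have t1: "1 < t" unfolding t_def using h4 by (simp only: mult.assoc)
  have main: "sector_angle S / sector_angle T \<in> {1/t..t}"
    if th: "\<theta> \<in> Theta N" and sr: "sector_renorm \<theta> Xm Xp a b"
      and S: "S \<in> renorm_triangulation \<theta> Xm Xp a b" and T: "T \<in> renorm_triangulation \<theta> Xm Xp a b"
      and pos: "0 < sector_angle S" "0 < sector_angle T" for \<theta> Xm Xp a b S T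
  proof -
    obtain \<alpha> \<beta> where ab: "0 \<le> \<alpha>" "0 \<le> \<beta>" "0 < \<alpha> + \<beta>" "\<alpha> + \<beta> < 1"
      "Xm = sector (- \<alpha>) \<alpha>" "Xp = sector 0 \<beta>"
      using sr unfolding sector_renorm_def by blast
    have sr': "sector_renorm \<theta> (sector (- \<alpha>) \<alpha>) (sector 0 \<beta>) a b" using sr ab by simp
    have cS: "sector_angle S = 2 * pi * \<alpha> \<or> sector_angle S = 2 * pi * \<beta>"
      by (rule angle_cases) (use S ab in auto)
    have cT: "sector_angle T = 2 * pi * \<alpha> \<or> sector_angle T = 2 * pi * \<beta>"
      by (rule angle_cases) (use T ab in auto)
    have r1: "1 \<in> {1/t..t}" using t1 by auto
    have mix: "(2 * pi * \<alpha>) / (2 * pi * \<beta>) \<in> {1/t..t} \<and> (2 * pi * \<beta>) / (2 * pi * \<alpha>) \<in> {1/t..t}"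
      if "0 < \<alpha>" "0 < \<beta>"
    proof -
      have k: "\<alpha> \<le> t * \<beta>" "\<beta> \<le> t * \<alpha>" using key[OF th sr' that ab(4)] unfolding t_def by auto
      have tp: "0 < t" using t1 by simp
      have e1: "(2 * pi * \<alpha>) / (2 * pi * \<beta>) = \<alpha> / \<beta>" by simp
      have e2: "(2 * pi * \<beta>) / (2 * pi * \<alpha>) = \<beta> / \<alpha>" by simp
      have "\<alpha> / \<beta> \<le> t" "1 / t \<le> \<alpha> / \<beta>" "\<beta> / \<alpha> \<le> t" "1 / t \<le> \<beta> / \<alpha>"
        using k that tp by (simp_all add: divide_simps mult.commute)
      thus ?thesis unfolding e1 e2 by auto
    qed
    show ?thesis
    proof -
      have "sector_angle S = sector_angle T \<or>
            (sector_angle S = 2 * pi * \<alpha> \<and> sector_angle T = 2 * pi * \<beta>) \<or>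
            (sector_angle S = 2 * pi * \<beta> \<and> sector_angle T = 2 * pi * \<alpha>)" using cS cT by auto
      thus ?thesis
      proof (elim disjE conjE)
        assume "sector_angle S = sector_angle T" thus ?thesis using pos r1 by simp
      next
        assume e: "sector_angle S = 2 * pi * \<alpha>" "sector_angle T = 2 * pi * \<beta>"
        hence "0 < \<alpha>" "0 < \<beta>" using pos by (simp_all add: zero_less_mult_iff)
        thus ?thesis using mix e by simp
      next
        assume e: "sector_angle S = 2 * pi * \<beta>" "sector_angle T = 2 * pi * \<alpha>"
        hence "0 < \<alpha>" "0 < \<beta>" using pos by (simp_all add: zero_less_mult_iff)
        thus ?thesis using mix e by simp
      qed
    qed
  qed
  show ?thesis using t1 main by blast
qed

end
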